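(* Let $B(z)=\sum_{n\ge0}b_nz^n$, where $b_n$ is the number of Motzkin paths of length $n$ that have no horizontal step on level equal to their height. Then $$B(z)=(1+v+v^2)(1-v^{-2})\sum_{h\ge1}(-1)^{h-1}\frac{v^{h}}{1-v^{h}}+\frac{(1+v)(1+v+v^2)}{v}.$$
   Context: A Motzkin path of length $n$ is a sequence of $n$ steps, each an up-step $(1,1)$, a down-step $(1,-1)$ or a horizontal step $(1,0)$, starting at $(0,0)$, ending at $(n,0)$, and never going below the $x$-axis. Its height $h$ is the maximal $y$-coordinate reached. A horizontal step on level $j$ is a horizontal step from $(x,j)$ to $(x+1,j)$. Here $v=v(z)=\frac{1-z-\sqrt{1-2z-3z^2}}{2z}$ is the formal power series with $v(0)=0$ satisfying $z=\frac{v}{1+v+v^2}$. *)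

theory Defs
  imports "HOL-Computational_Algebra.Formal_Power_Series"
          "HOL-Computational_Algebra.Formal_Laurent_Series"
begin

datatype step = U | D | H

fun step_val :: "step \<Rightarrow> int" where
  "step_val U = 1" | "step_val D = -1" | "step_val H = 0"

definition lvl :: "step list \<Rightarrow> nat \<Rightarrow> int" where
  "lvl p i = sum_list (map step_val (take i p))"

definition motzkin_path :: "step list \<Rightarrow> bool" where
  "motzkin_path p \<longleftrightarrow> (\<forall>i \<le> length p. 0 \<le> lvl p i) \<and> lvl p (length p) = 0"

definition height :: "step list \<Rightarrow> int" where
  "height p = Max {lvl p i | i. i \<le> length p}"

definition hstep_on_level :: "step list \<Rightarrow> int \<Rightarrow> bool" where
  "hstep_on_level p j \<longleftrightarrow> (\<exists>i < length p. p ! i = H \<and> lvl p i = j)"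

definition b_count :: "nat \<Rightarrow> nat" where
  "b_count n = card {p. length p = n \<and> motzkin_path p \<and> \<not> hstep_on_level p (height p)}"

end

theory Submission
  imports Defs
begin


fun okp :: "bool \<Rightarrow> nat \<Rightarrow> nat \<Rightarrow> step list \<Rightarrow> bool" where
  "okp e h a [] = (a = 0)"
| "okp e h a (s # p) = (case s of U \<Rightarrow> a < h \<and> okp e h (Suc a) p
     | D \<Rightarrow> 0 < a \<and> okp e h (a - 1) p
     | H \<Rightarrow> \<not> (e \<and> a = h) \<and> okp e h a p)"

definition cnt :: "bool \<Rightarrow> nat \<Rightarrow> nat \<Rightarrow> nat \<Rightarrow> nat" where
  "cnt e h n a = card {p. length p = n \<and> okp e h a p}"

lemma finite_len: "finite {p :: step list. length p = n \<and> P p}"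
proof -
  have "{p :: step list. length p = n \<and> P p} \<subseteq> {xs. set xs \<subseteq> {U,D,H} \<and> length xs = n}"
    by (auto intro: step.exhaust)
  moreover have "finite {xs. set xs \<subseteq> {U,D,H} \<and> length xs = n}"
    by (rule finite_lists_length_eq) simp
  ultimately show ?thesis by (rule finite_subset)
qed

lemma cnt_0: "cnt e h 0 a = (if a = 0 then 1 else 0)"
proof -
  have "{p. length p = 0 \<and> okp e h a p} = (if a = 0 then {[]} else {})" by auto
  then show ?thesis unfolding cnt_def by simp
qed

lemma cnt_Suc: "cnt e h (Suc n) a =
   (if e \<and> a = h then 0 else cnt e h n a) + (if a < h then cnt e h n (Suc a) else 0)
   + (if 0 < a then cnt e h n (a - 1) else 0)"
proof -
  let ?S = "\<lambda>b. {p. length p = n \<and> okp e h b p}"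
  have eq: "{p. length p = Suc n \<and> okp e h a p} =
     Cons H ` {p \<in> ?S a. \<not> (e \<and> a = h)} \<union> Cons U ` {p \<in> ?S (Suc a). a < h}
     \<union> Cons D ` {p \<in> ?S (a - 1). 0 < a}"
  proof (intro equalityI subsetI)
    fix p assume "p \<in> {p. length p = Suc n \<and> okp e h a p}"
    then obtain s q where "p = s # q" "length q = n" "okp e h a (s # q)"
      by (cases p) auto
    then show "p \<in> Cons H ` {p \<in> ?S a. \<not> (e \<and> a = h)} \<union> Cons U ` {p \<in> ?S (Suc a). a < h}
     \<union> Cons D ` {p \<in> ?S (a - 1). 0 < a}"
      by (cases s) auto
  qed auto
  have c: "card {p \<in> ?S b. P} = (if P then card (?S b) else 0)" for b P by auto
  have "card {p. length p = Suc n \<and> okp e h a p} =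
     card (Cons H ` {p \<in> ?S a. \<not> (e \<and> a = h)} \<union> Cons U ` {p \<in> ?S (Suc a). a < h})
     + card (Cons D ` {p \<in> ?S (a - 1). 0 < a})"
    unfolding eq by (rule card_Un_disjoint) (auto intro: finite_len)
  also have "card (Cons H ` {p \<in> ?S a. \<not> (e \<and> a = h)} \<union> Cons U ` {p \<in> ?S (Suc a). a < h})
     = card (Cons H ` {p \<in> ?S a. \<not> (e \<and> a = h)}) + card (Cons U ` {p \<in> ?S (Suc a). a < h})"
    by (rule card_Un_disjoint) (auto intro: finite_len)
  finally show ?thesis unfolding cnt_def
    by (simp add: card_image c)
qed

lemma lvl_0 [simp]: "lvl p 0 = 0" by (simp add: lvl_def)
lemma lvl_Cons: "lvl (s # p) (Suc i) = step_val s + lvl p i" by (simp add: lvl_def)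

lemma all_le_Suc: "(\<forall>i\<le>Suc n. P i) \<longleftrightarrow> P 0 \<and> (\<forall>i\<le>n. P (Suc i))"
  by (metis Suc_le_mono le0 not0_implies_Suc)
lemma ex_less_Suc: "(\<exists>i<Suc n. P i) \<longleftrightarrow> P 0 \<or> (\<exists>i<n. P (Suc i))"
  by (metis Suc_less_eq not0_implies_Suc zero_less_Suc)

lemma okp_char:
  assumes "a \<le> h"
  shows "okp e h a p \<longleftrightarrow> (\<forall>i\<le>length p. 0 \<le> int a + lvl p i \<and> int a + lvl p i \<le> int h)
     \<and> int a + lvl p (length p) = 0
     \<and> (e \<longrightarrow> \<not> (\<exists>i<length p. p ! i = H \<and> int a + lvl p i = int h))"
  using assms
proof (induction p arbitrary: a)
  case Nil
  then show ?case by auto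
next
  case (Cons s p)
  show ?case
  proof (cases s)
    case U
    show ?thesis
    proof (cases "a < h")
      case True
      then show ?thesis using Cons.IH[of "Suc a"] U
        by (simp add: all_le_Suc ex_less_Suc lvl_Cons algebra_simps)
    next
      case False
      then have "\<not> (int a + lvl (s#p) 1 \<le> int h)" using U Cons.prems by (simp add: lvl_def)
      then show ?thesis using False U by (auto simp: all_le_Suc)
    qed
  next
    case D
    show ?thesis
    proof (cases "0 < a")
      case True
      then show ?thesis using Cons.IH[of "a - 1"] D Cons.prems
        by (simp add: all_le_Suc ex_less_Suc lvl_Cons algebra_simps of_nat_diff)
    next
      case False
      then have "\<not> (0 \<le> int a + lvl (s#p) 1)" using D by (simp add: lvl_def)
      then show ?thesis using False D by (auto simp: all_le_Suc)
    qed
  next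
    case H
    then show ?thesis using Cons.IH[of a] Cons.prems
      by (auto simp add: all_le_Suc ex_less_Suc lvl_Cons algebra_simps)
  qed
qed

lemma lvl_le: "lvl p i \<le> int (length p)"
proof (induction p arbitrary: i)
  case Nil then show ?case by (simp add: lvl_def)
next
  case (Cons s p)
  show ?case
  proof (cases i)
    case (Suc j)
    have "step_val s \<le> 1" by (cases s) auto
    then show ?thesis using Cons.IH[of j] Suc by (simp add: lvl_Cons)
  qed simp
qed

lemma height_set: "{lvl p i | i. i \<le> length p} = lvl p ` {..length p}" by auto

lemma height_le_iff: "height p \<le> c \<longleftrightarrow> (\<forall>i\<le>length p. lvl p i \<le> c)"
  unfolding height_def height_set by (subst Max_le_iff) auto

lemma lvl_le_height: "i \<le> length p \<Longrightarrow> lvl p i \<le> height p"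
  unfolding height_def height_set by (rule Max_ge) auto

lemma height_nonneg: "0 \<le> height p"
  using lvl_le_height[of 0 p] by simp

lemma height_le_len: "height p \<le> int (length p)"
  using lvl_le height_le_iff by blast

lemma okp0: "okp e h 0 p \<longleftrightarrow> motzkin_path p \<and> height p \<le> int h \<and> (e \<longrightarrow> \<not> hstep_on_level p (int h))"
  by (subst okp_char) (auto simp: motzkin_path_def height_le_iff hstep_on_level_def)

definition Mh :: "nat \<Rightarrow> nat \<Rightarrow> step list set" where
  "Mh n h = {p. length p = n \<and> motzkin_path p \<and> \<not> hstep_on_level p (height p) \<and> height p = int h}"

lemma Mh_0: "Mh n 0 = {p. length p = n \<and> okp True 0 0 p}"
  unfolding Mh_def okp0 by (auto; metis antisym height_nonneg)

lemma int_between: "(x::int) \<le> 1 + k \<Longrightarrow> \<not> x \<le> k \<Longrightarrow> x = 1 + k" by simp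

lemma Mh_Suc: "Mh n (Suc k) = {p. length p = n \<and> okp True (Suc k) 0 p} - {p. length p = n \<and> okp False k 0 p}"
  unfolding Mh_def okp0 by (auto; metis int_between)

lemma sub_okp0: "okp False k 0 p \<Longrightarrow> okp True (Suc k) 0 p"
proof -
  assume "okp False k 0 p"
  then have m: "motzkin_path p" "height p \<le> int k" by (auto simp: okp0)
  have "\<not> hstep_on_level p (int (Suc k))"
  proof
    assume "hstep_on_level p (int (Suc k))"
    then obtain i where "i < length p" "lvl p i = int (Suc k)" by (auto simp: hstep_on_level_def)
    with lvl_le_height[of i p] m show False by simp
  qed
  with m show "okp True (Suc k) 0 p" by (simp add: okp0)
qed

lemma sub_okp: "{p. length p = n \<and> okp False k 0 p} \<subseteq> {p. length p = n \<and> okp True (Suc k) 0 p}"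
  using sub_okp0 by auto

lemma card_Mh: "real (card (Mh n h)) = (if h = 0 then real (cnt True 0 n 0)
     else real (cnt True h n 0) - real (cnt False (h - 1) n 0))"
proof (cases h)
  case 0 then show ?thesis by (simp add: Mh_0 cnt_def)
next
  case (Suc k)
  have "card (Mh n h) = cnt True h n 0 - cnt False k n 0"
    unfolding Suc Mh_Suc cnt_def by (rule card_Diff_subset) (auto intro: finite_len sub_okp0)
  moreover have "cnt False k n 0 \<le> cnt True h n 0"
    unfolding Suc cnt_def by (rule card_mono[OF finite_len sub_okp])
  ultimately show ?thesis using Suc by (simp add: of_nat_diff)
qed

lemma b_count_sum:
  assumes "n \<le> N"
  shows "real (b_count n) = (\<Sum>h\<le>N. real (card (Mh n h)))"
proof -
  have eq: "{p. length p = n \<and> motzkin_path p \<and> \<not> hstep_on_level p (height p)} = (\<Union>h\<le>N. Mh n h)"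
  proof (intro equalityI subsetI)
    fix p assume p: "p \<in> {p. length p = n \<and> motzkin_path p \<and> \<not> hstep_on_level p (height p)}"
    have "height p = int (nat (height p))" using height_nonneg by simp
    moreover have "nat (height p) \<le> N" using height_le_len[of p] p assms by auto
    ultimately show "p \<in> (\<Union>h\<le>N. Mh n h)" using p unfolding Mh_def by force
  qed (auto simp: Mh_def)
  have "b_count n = card (\<Union>h\<le>N. Mh n h)" unfolding b_count_def eq ..
  also have "\<dots> = (\<Sum>h\<le>N. card (Mh n h))"
    by (rule card_UN_disjoint) (auto simp: Mh_def intro: finite_subset[OF _ finite_len[of n "\<lambda>_. True"]])
  finally show ?thesis by simp
qed



definition mm :: "bool \<Rightarrow> nat \<Rightarrow> nat" where "mm e h = (if e then 2*h+1 else 2*h+2)"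
definition uu :: "'a::comm_ring_1 \<Rightarrow> nat \<Rightarrow> nat \<Rightarrow> 'a" where "uu V m a = V^a - V^(m-a)"

lemma key:
  fixes V :: "'a::comm_ring_1"
  assumes "a \<le> h"
  shows "(1+V+V^2) * uu V (mm e h) a = (if a=0 then 1 - V^(mm e h+2) else 0)
     + V * ((if e \<and> a = h then 0 else uu V (mm e h) a) + (if a<h then uu V (mm e h) (Suc a) else 0)
     + (if 0<a then uu V (mm e h) (a-1) else 0))"
proof (cases a)
  case 0
  show ?thesis
  proof (cases h)
    case 0
    then show ?thesis using \<open>a = 0\<close> by (cases e) (simp_all add: mm_def uu_def algebra_simps power2_eq_square power3_eq_cube power4_eq_xxxx)
  next
    case (Suc k)
    obtain c where c: "mm e h = c + 3" using Suc by (cases e) (auto simp: mm_def)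
    have "(1+V+V^2) * (1 - V^(c+3)) = 1 - V^(c+3+2) + V * ((1 - V^(c+3)) + (V - V^(c+2)))"
      by (simp add: power_add algebra_simps eval_nat_numeral)
    then show ?thesis using \<open>a = 0\<close> Suc c by (simp add: uu_def)
  qed
next
  case (Suc j)
  show ?thesis
  proof (cases "a < h")
    case True
    have "2*j+4 \<le> mm e h" using True Suc by (auto simp: mm_def)
    then obtain c where c: "mm e h = 2*j+4+c" using le_Suc_ex by blast
    have e1: "mm e h - Suc j = j+3+c" "mm e h - Suc (Suc j) = j+2+c" "mm e h - j = j+4+c" using c by auto
    have "(1+V+V^2) * (V^(Suc j) - V^(j+3+c)) = V * ((V^(Suc j) - V^(j+3+c)) + (V^(Suc (Suc j)) - V^(j+2+c)) + (V^j - V^(j+4+c)))"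
      by (simp add: power_add algebra_simps power2_eq_square power3_eq_cube power4_eq_xxxx)
    then show ?thesis using True Suc by (simp add: uu_def e1)
  next
    case False
    then have h: "h = Suc j" using assms Suc by simp
    show ?thesis
    proof (cases e)
      case True
      have e1: "mm True (Suc j) - Suc j = j+2" "mm True (Suc j) - j = j+3" by (auto simp: mm_def)
      have "(1+V+V^2) * (V^(Suc j) - V^(j+2)) = V * (V^j - V^(j+3))"
        by (simp add: power_add algebra_simps eval_nat_numeral)
      then show ?thesis using True h Suc by (simp add: uu_def e1)
    next
      case False
      have e1: "mm False (Suc j) - Suc j = j+3" "mm False (Suc j) - j = j+4" by (auto simp: mm_def)
      have "(1+V+V^2) * (V^(Suc j) - V^(j+3)) = V * ((V^(Suc j) - V^(j+3)) + (V^j - V^(j+4)))"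
        by (simp add: power_add algebra_simps power2_eq_square power3_eq_cube power4_eq_xxxx)
      then show ?thesis using False h Suc by (simp add: uu_def e1)
    qed
  qed
qed

definition Wf :: "real fps \<Rightarrow> bool \<Rightarrow> nat \<Rightarrow> nat \<Rightarrow> real fps" where
  "Wf v e h a = (1+v+v^2) * uu v (mm e h) a * inverse (1 - v^(mm e h + 2))"

lemma one_minus_pow_nth0: "v $ 0 = 0 \<Longrightarrow> (1 - v^Suc k :: real fps) $ 0 = 1"
  by (simp add: startsby_zero_power)

lemma Wf_rec:
  fixes v :: "real fps"
  assumes v0: "v $ 0 = 0" and Xq: "fps_X * (1+v+v^2) = v" and "a \<le> h"
  shows "Wf v e h a = (if a = 0 then 1 else 0) + fps_X * ((if e \<and> a = h then 0 else Wf v e h a)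
     + (if a<h then Wf v e h (Suc a) else 0) + (if 0<a then Wf v e h (a-1) else 0))"
proof -
  define m where "m = mm e h"
  define I where "I = inverse (1 - v^(m + 2))"
  define Q where "Q = 1+v+v^2"
  have DI: "(1 - v^(m+2)) * I = 1" unfolding I_def
    by (rule inverse_mult_eq_1') (simp add: startsby_zero_power v0)
  define S where "S = (if e \<and> a = h then 0 else uu v m a) + (if a<h then uu v m (Suc a) else 0) + (if 0<a then uu v m (a-1) else 0)"
  have k: "Q * uu v m a = (if a=0 then 1 - v^(m+2) else 0) + v * S"
    unfolding Q_def S_def m_def by (rule key[OF assms(3)])
  have W: "Wf v e h b = Q * uu v m b * I" for b unfolding Wf_def Q_def m_def I_def ..
  have "Wf v e h a = (Q * uu v m a) * I" by (simp add: W)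
  also have "\<dots> = (if a = 0 then 1 else 0) * ((1 - v^(m+2)) * I) + v * S * I"
    unfolding k by (simp add: algebra_simps)
  also have "\<dots> = (if a = 0 then 1 else 0) + (fps_X * Q) * S * I"
    unfolding DI Xq[folded Q_def] by simp
  also have "(fps_X * Q) * S * I = fps_X * ((if e \<and> a = h then 0 else Wf v e h a)
     + (if a<h then Wf v e h (Suc a) else 0) + (if 0<a then Wf v e h (a-1) else 0))"
    unfolding W S_def by (simp add: algebra_simps)
  finally show ?thesis .
qed

lemma Wf_cnt:
  fixes v :: "real fps"
  assumes v0: "v $ 0 = 0" and Xq: "fps_X * (1+v+v^2) = v"
  shows "a \<le> h \<Longrightarrow> Wf v e h a $ n = real (cnt e h n a)"
proof (induction n arbitrary: a)
  case 0
  show ?case by (subst Wf_rec[OF v0 Xq 0]) (simp add: cnt_0)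
next
  case (Suc n)
  have "Wf v e h a $ Suc n = (if e \<and> a = h then 0 else Wf v e h a $ n)
     + (if a<h then Wf v e h (Suc a) $ n else 0) + (if 0<a then Wf v e h (a-1) $ n else 0)"
    by (subst Wf_rec[OF v0 Xq Suc.prems]) simp
  also have "\<dots> = real (cnt e h (Suc n) a)"
  proof -
    have A: "Wf v e h a $ n = real (cnt e h n a)" using Suc.IH Suc.prems by blast
    have B: "a < h \<Longrightarrow> Wf v e h (Suc a) $ n = real (cnt e h n (Suc a))" using Suc.IH by simp
    have C: "Wf v e h (a-1) $ n = real (cnt e h n (a-1))" using Suc.IH Suc.prems by simp
    have B': "(if a < h then Wf v e h (Suc a) $ n else 0) = (if a<h then real (cnt e h n (Suc a)) else 0)"
      using B by simp
    show ?thesis unfolding A B' C cnt_Suc by simp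
  qed
  finally show ?case .
qed



lemma base_id:
  fixes V :: "'a::field"
  assumes "1 - V \<noteq> 0" "1 - V^2 \<noteq> 0" "1 - V^3 \<noteq> 0"
  shows "V^2 * ((1+V+V^2) * (1 - V^1) / (1 - V^3)) =
    (1+V+V^2) * (V^2 - 1) * (V^1/(1-V^1) - V^2/(1-V^2) + V^3/(1-V^3)) + (1+V)*(1+V+V^2)*V"
proof -
  have h1: "(1-V)*inverse(1-V) = 1" "(1-V^2)*inverse(1-V^2) = 1" "(1-V^3)*inverse(1-V^3) = 1"
    using assms by auto
  show ?thesis unfolding divide_inverse power_one_right using h1 by algebra
qed

lemma step_id:
  fixes V y :: "'a::field"
  assumes "1 - y*V^3 \<noteq> 0" "1 - y*V^2 \<noteq> 0"
  shows "V^2 * ((1+V+V^2) * (1 - y*V) / (1 - y*V^3) - (1+V+V^2) * (1 - y) / (1 - y*V^2))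
    = (1+V+V^2) * (V^2 - 1) * (- (y*V^2) / (1 - y*V^2) + y*V^3/(1-y*V^3))"
proof -
  have h1: "(1 - y*V^3)*inverse(1 - y*V^3) = 1" "(1 - y*V^2)*inverse(1 - y*V^2) = 1"
    using assms by auto
  show ?thesis unfolding divide_inverse using h1 by algebra
qed

lemma sum_id:
  fixes V :: "'a::field"
  assumes nz: "\<And>k. 0 < k \<Longrightarrow> 1 - V^k \<noteq> 0"
  shows "V^2 * ((1+V+V^2) * (1 - V^(2*0+1)) / (1 - V^(2*0+3)) + (\<Sum>h\<in>{1..N}.
       (1+V+V^2) * (1 - V^(2*h+1)) / (1 - V^(2*h+3)) - (1+V+V^2) * (1 - V^(2*(h-1)+2)) / (1 - V^(2*(h-1)+4))))
     = (1+V+V^2) * (V^2 - 1) * (\<Sum>h<2*N+3. (-1)^h * V^(Suc h) / (1 - V^(Suc h))) + (1+V)*(1+V+V^2)*V"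
proof (induction N)
  case 0
  have s: "(\<Sum>h<3. (-1)^h * V^(Suc h) / (1 - V^(Suc h))) = V^1/(1-V^1) - V^2/(1-V^2) + V^3/(1-V^3)"
    by (simp add: eval_nat_numeral)
  have b: "1 - V \<noteq> 0" using nz[of 1] by simp
  show ?case using base_id[OF b nz nz] s by simp
next
  case (Suc N)
  define Q where "Q = 1+V+V^2"
  define y where "y = V^(2*N+2)"
  have p1: "V^(2*Suc N+1) = y*V" unfolding y_def by (subst power_Suc2[symmetric], simp)
  have p2: "V^(2*Suc N+3) = y*V^3" proof -
    have "2*Suc N+3 = (2*N+2)+3" by simp
    then show ?thesis unfolding y_def by (simp only: power_add)
  qed
  have p3: "V^(2*(Suc N-1)+2) = y" unfolding y_def by simp
  have p4: "V^(2*(Suc N-1)+4) = y*V^2" proof -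
    have "2*(Suc N-1)+4 = (2*N+2)+2" by simp
    then show ?thesis unfolding y_def by (simp only: power_add)
  qed
  have p5: "V^(Suc (2*N+3)) = y*V^2" proof -
    have "Suc (2*N+3) = (2*N+2)+2" by simp
    then show ?thesis unfolding y_def by (simp only: power_add)
  qed
  have p6: "V^(Suc (2*N+4)) = y*V^3" proof -
    have "Suc (2*N+4) = (2*N+2)+3" by simp
    then show ?thesis unfolding y_def by (simp only: power_add)
  qed
  note p = p1 p2 p3 p4 p5 p6
  have n1: "1 - y*V^3 \<noteq> 0" "1 - y*V^2 \<noteq> 0"
    using nz[of "Suc (2*N+4)"] nz[of "Suc (2*N+3)"] unfolding p5 p6 by simp_all
  have sT: "(\<Sum>h<2*Suc N+3. (-1)^h * V^(Suc h) / (1 - V^(Suc h))) =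
     (\<Sum>h<2*N+3. (-1)^h * V^(Suc h) / (1 - V^(Suc h))) + (- (y*V^2) / (1 - y*V^2) + y*V^3/(1-y*V^3))"
  proof -
    have e: "2*Suc N+3 = Suc (Suc (2*N+3))" by simp
    have m1: "(-1::'a)^(2*N+3) = -1" by (simp add: power_add power_mult)
    have m2: "(-1::'a)^(Suc (2*N+3)) = 1" by (simp add: power_add power_mult)
    have q6: "V^(Suc (Suc (2*N+3))) = y*V^3" using p6 by simp
    show ?thesis unfolding e sum.lessThan_Suc p5 q6 m1 m2 by simp
  qed
  have sG: "(\<Sum>h\<in>{1..Suc N}. Q * (1 - V^(2*h+1)) / (1 - V^(2*h+3)) - Q * (1 - V^(2*(h-1)+2)) / (1 - V^(2*(h-1)+4)))
      = (\<Sum>h\<in>{1..N}. Q * (1 - V^(2*h+1)) / (1 - V^(2*h+3)) - Q * (1 - V^(2*(h-1)+2)) / (1 - V^(2*(h-1)+4)))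
        + (Q * (1 - y*V) / (1 - y*V^3) - Q * (1 - y) / (1 - y*V^2))"
    using p by (simp del: power_Suc)
  have gen: "\<And>a g t d dt c K. V^2*(a+g) = K*t + c \<Longrightarrow> V^2*d = K*dt \<Longrightarrow> V^2*(a+(g+d)) = K*(t+dt) + c"
    by algebra
  show ?case unfolding sT sG[unfolded Q_def] by (rule gen[OF Suc.IH step_id[OF n1]])
qed



lemma fps_to_fls_sum: "fps_to_fls (sum f A) = (\<Sum>x\<in>A. fps_to_fls (f x))"
  using sum_comp_morphism[of fps_to_fls f A] by (simp add: o_def)

lemma Xq_of:
  fixes v :: "real fps"
  assumes v0: "v $ 0 = 0" and X: "fps_X = v / (1 + v + v^2)"
  shows "fps_X * (1+v+v^2) = v"
proof -
  have q0: "(1+v+v^2) $ 0 \<noteq> 0" using v0 by (simp add: startsby_zero_power)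
  have "fps_X * (1+v+v^2) = v * (inverse (1+v+v^2) * (1+v+v^2))"
    unfolding X fps_divide_unit[OF q0] by (simp add: mult.assoc)
  also have "\<dots> = v" using inverse_mult_eq_1[OF q0] by simp
  finally show ?thesis .
qed

definition Bp :: "real fps \<Rightarrow> nat \<Rightarrow> real fps" where
  "Bp v N = Wf v True 0 0 + (\<Sum>h\<in>{1..N}. Wf v True h 0 - Wf v False (h-1) 0)"

lemma Bp_nth:
  fixes v :: "real fps"
  assumes v0: "v $ 0 = 0" and Xq: "fps_X * (1+v+v^2) = v" and "n \<le> N"
  shows "Bp v N $ n = real (b_count n)"
proof -
  have "real (b_count n) = (\<Sum>h\<le>N. real (card (Mh n h)))" by (rule b_count_sum[OF assms(3)])
  also have "{..N} = insert 0 {1..N}" by auto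
  also have "(\<Sum>h\<in>insert 0 {1..N}. real (card (Mh n h))) = real (card (Mh n 0)) + (\<Sum>h\<in>{1..N}. real (card (Mh n h)))"
    by (rule sum.insert) auto
  also have "\<dots> = Bp v N $ n"
    unfolding Bp_def fps_add_nth fps_sum_nth card_Mh
    by (auto simp: Wf_cnt[OF v0 Xq] intro!: sum.cong)
  finally show ?thesis ..
qed

lemma fls_Wf:
  fixes v :: "real fps"
  assumes v0: "v $ 0 = 0"
  shows "fps_to_fls (Wf v e h 0) = (1 + fps_to_fls v + fps_to_fls v ^ 2) * (1 - fps_to_fls v ^ mm e h)
            / (1 - fps_to_fls v ^ (mm e h + 2))"
proof -
  have d0: "(1 - v^(mm e h + 2)) $ 0 \<noteq> 0" using v0 by (simp add: startsby_zero_power)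
  show ?thesis
    unfolding Wf_def uu_def fls_times_fps_to_fls fls_inverse_fps_to_fls[OF subdegree_eq_0[OF d0], symmetric]
    by (simp add: fps_to_fls_power fls_times_fps_to_fls divide_inverse)
qed

lemma fls_T:
  fixes v :: "real fps"
  assumes v0: "v $ 0 = 0"
  shows "fps_to_fls ((-1) ^ h * v ^ (Suc h) / (1 - v ^ (Suc h))) =
     (-1)^h * fps_to_fls v ^ Suc h / (1 - fps_to_fls v ^ Suc h)"
proof -
  have d0: "(1 - v^(Suc h)) $ 0 \<noteq> 0" using v0 by (simp add: startsby_zero_power)
  have m1: "fps_to_fls ((-1::real fps)^h) = (-1)^h" by (simp add: fps_to_fls_power)
  show ?thesis
    unfolding fps_divide_unit[OF d0] fls_times_fps_to_fls fls_inverse_fps_to_fls[OF subdegree_eq_0[OF d0], symmetric] m1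
    by (simp add: fps_to_fls_power fls_times_fps_to_fls divide_inverse)
qed

lemma Bp_id:
  fixes v :: "real fps"
  assumes v0: "v $ 0 = 0"
  shows "fps_to_fls v ^ 2 * fps_to_fls (Bp v N) =
    (1 + fps_to_fls v + fps_to_fls v ^ 2) * (fps_to_fls v ^ 2 - 1) *
      fps_to_fls (\<Sum>h<2*N+3. (-1) ^ h * v ^ (Suc h) / (1 - v ^ (Suc h)))
    + (1 + fps_to_fls v) * (1 + fps_to_fls v + fps_to_fls v ^ 2) * fps_to_fls v"
proof -
  define V where "V = fps_to_fls v"
  have nz: "1 - V^k \<noteq> 0" if "0 < k" for k
  proof -
    have "(1 - v^k) $ 0 \<noteq> 0" using v0 that by (simp add: startsby_zero_power)
    then have "1 - v^k \<noteq> 0" by auto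
    then have "fps_to_fls (1 - v^k) \<noteq> 0" by simp
    then show ?thesis unfolding V_def by (simp add: fps_to_fls_power)
  qed
  have m: "mm True h = 2*h+1" "mm True h + 2 = 2*h+3" "mm False k = 2*k+2" "mm False k + 2 = 2*k+4" for h k
    by (simp_all add: mm_def)
  have m2: "2*h+1+2 = 2*h+3" "2*k+2+2 = 2*k+4" for h k :: nat by simp_all
  show ?thesis
    unfolding Bp_def fps_to_fls_plus fps_to_fls_sum fps_to_fls_minus fls_Wf[OF v0] fls_T[OF v0] V_def[symmetric] m m2
    by (rule sum_id[OF nz])
qed

lemma T_nth0:
  fixes v :: "real fps"
  assumes v0: "v $ 0 = 0" and "n \<le> h"
  shows "((-1) ^ h * v ^ (Suc h) / (1 - v ^ (Suc h))) $ n = 0"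
proof -
  have d0: "(1 - v^(Suc h)) $ 0 \<noteq> 0" using v0 by (simp add: startsby_zero_power)
  have "(-1) ^ h * v ^ (Suc h) / (1 - v ^ (Suc h)) = v ^ (Suc h) * ((-1) ^ h * inverse (1 - v ^ (Suc h)))"
    unfolding fps_divide_unit[OF d0] by (simp add: algebra_simps)
  also have "\<dots> $ n = 0" unfolding fps_mult_nth
    using startsby_zero_power_prefix[OF v0, of "Suc h"] assms(2) by (intro sum.neutral) auto
  finally show ?thesis .
qed

lemma agree_mult:
  fixes c f g :: "real fps"
  assumes "\<And>i. i \<le> n \<Longrightarrow> f $ i = g $ i"
  shows "(c * f) $ n = (c * g) $ n"
  unfolding fps_mult_nth using assms by (intro sum.cong) auto

lemma suminf_nth:
  fixes v :: "real fps"
  assumes v0: "v $ 0 = 0" and "Suc n \<le> K"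
  shows "(\<Sum>h. (-1) ^ h * v ^ (Suc h) / (1 - v ^ (Suc h))) $ n =
         (\<Sum>h<K. (-1) ^ h * v ^ (Suc h) / (1 - v ^ (Suc h))) $ n"
proof -
  define T where "T = (\<lambda>h. (-1) ^ h * v ^ (Suc h) / (1 - v ^ (Suc h)))"
  have tail: "(\<Sum>h<N. T h $ m) = (\<Sum>h<Suc m. T h $ m)" if "Suc m \<le> N" for N m
    by (rule sum.mono_neutral_right) (use that T_nth0[OF v0] in \<open>auto simp: T_def simp del: power_Suc\<close>)
  define Sf where "Sf = Abs_fps (\<lambda>m. \<Sum>h<Suc m. T h $ m)"
  have "T sums Sf" unfolding sums_def
  proof (rule tendsto_fpsI)
    fix m
    show "eventually (\<lambda>N. (\<Sum>h<N. T h) $ m = Sf $ m) sequentially"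
      using eventually_ge_at_top[of "Suc m"]
      by eventually_elim (simp add: fps_sum_nth Sf_def tail)
  qed
  then have "suminf T = Sf" by (rule sums_unique[symmetric])
  then show ?thesis unfolding T_def[symmetric] using tail[OF assms(2)] by (simp add: Sf_def fps_sum_nth)
qed



theorem mainTheorem5:
  fixes v :: "real fps"
  assumes "fps_nth v 0 = 0"
      and "fps_X = v / (1 + v + v ^ 2)"
  shows "fps_to_fls (Abs_fps (\<lambda>n. real (b_count n))) =
           (1 + fps_to_fls v + (fps_to_fls v) ^ 2) * (1 - (fps_to_fls v) powi (-2))
             * fps_to_fls (\<Sum>h. (-1) ^ h * v ^ (Suc h) / (1 - v ^ (Suc h)))
         + (1 + fps_to_fls v) * (1 + fps_to_fls v + (fps_to_fls v) ^ 2) / fps_to_fls v"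
proof -
  have v0: "v $ 0 = 0" using assms(1) by simp
  have Xq: "fps_X * (1+v+v^2) = v" by (rule Xq_of[OF v0 assms(2)])
  define Bf where "Bf = Abs_fps (\<lambda>n. real (b_count n))"
  define S where "S = (\<Sum>h. (-1) ^ h * v ^ (Suc h) / (1 - v ^ (Suc h)) :: real fps)"
  define Sp where "Sp = (\<lambda>N. (\<Sum>h<2*N+3. (-1) ^ h * v ^ (Suc h) / (1 - v ^ (Suc h)) :: real fps))"
  have fpsid: "v^2 * Bp v N = (1+v+v^2) * (v^2 - 1) * Sp N + (1+v)*(1+v+v^2)*v" for N
  proof -
    have "fps_to_fls (v^2 * Bp v N) = fps_to_fls ((1+v+v^2) * (v^2 - 1) * Sp N + (1+v)*(1+v+v^2)*v)"
      using Bp_id[OF v0, of N] unfolding Sp_def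
      by (simp add: fls_times_fps_to_fls fps_to_fls_power)
    then show ?thesis by (simp only: fps_to_fls_eq_iff)
  qed
  have main: "v^2 * Bf = (1+v+v^2) * (v^2 - 1) * S + (1+v)*(1+v+v^2)*v"
  proof (rule fps_ext)
    fix n
    have "(v^2 * Bf) $ n = (v^2 * Bp v n) $ n"
      by (rule agree_mult) (simp add: Bf_def Bp_nth[OF v0 Xq])
    also have "\<dots> = ((1+v+v^2) * (v^2 - 1) * Sp n) $ n + ((1+v)*(1+v+v^2)*v) $ n"
      by (simp add: fpsid)
    also have "((1+v+v^2) * (v^2 - 1) * Sp n) $ n = ((1+v+v^2) * (v^2 - 1) * S) $ n"
      by (rule agree_mult) (unfold S_def Sp_def, subst suminf_nth[OF v0, of _ "2*n+3"], auto)
    finally show "(v^2 * Bf) $ n = ((1+v+v^2) * (v^2 - 1) * S + (1+v)*(1+v+v^2)*v) $ n" by simp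
  qed
  define V where "V = fps_to_fls v"
  have vnz: "v \<noteq> 0"
  proof
    assume "v = 0"
    then have "(fps_X :: real fps) = 0" using Xq by simp
    then show False by simp
  qed
  then have Vnz: "V \<noteq> 0" unfolding V_def by simp
  have m: "V^2 * fps_to_fls Bf = (1+V+V^2) * (V^2 - 1) * fps_to_fls S + (1+V)*(1+V+V^2)*V"
    using arg_cong[OF main, of fps_to_fls] unfolding V_def
    by (simp add: fls_times_fps_to_fls fps_to_fls_power)
  have pw: "V powi (-2) = inverse (V^2)" by (simp add: power_int_minus)
  have "fps_to_fls Bf = (1+V+V^2) * (1 - V powi (-2)) * fps_to_fls S + (1+V)*(1+V+V^2)/V"
  proof -
    have b: "fps_to_fls Bf = ((1+V+V^2) * (V^2 - 1) * fps_to_fls S + (1+V)*(1+V+V^2)*V) / V^2"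
      using m Vnz by (simp add: eq_divide_eq mult.commute)
    show ?thesis unfolding pw b using Vnz by (simp add: field_simps) (simp add: algebra_simps eval_nat_numeral)
  qed
  then show ?thesis unfolding Bf_def S_def V_def .
qed

end
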